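(* Let $w\in W$ be a strong minuscule element, and let $w=s_{i_1}\cdots s_{i_r}$ be any reduced expression of $w$. Then for every $i\in I$ we have $\#\{1\le p\le r \mid i_p=i\}\ge 1$; that is, every simple reflection $s_1,\dots,s_n$ appears at least once in every reduced expression of $w$.
   Context: Let $\mathfrak g$ be a finite-dimensional simple Lie algebra over $\mathbb C$ of type $\mathrm A_n$, $\mathrm B_n$, $\mathrm C_n$ or $\mathrm D_n$, with index set $I=\{1,\dots,n\}$, Cartan subalgebra $\mathfrak h$, pairing $\langle\cdot,\cdot\rangle:\mathfrak h^*\times\mathfrak h\to\mathbb C$, simple roots $\alpha_i$, simple coroots $\alpha_i^\vee$, fundamental weights $\Lambda_i$, integral weights $P=\bigoplus_{i\in I}\mathbb Z\Lambda_i$, dominant integral weights $P^+=\sum_{i\in I}\mathbb Z_{\ge0}\Lambda_i$, and Weyl group $W$ generated by the simple reflections $s_i$ in $\alpha_i$. For $\Lambda\in P$, an element $w\in W$ is called $\Lambda$-minuscule if there is a reduced expression $w=s_{i_1}\cdots s_{i_r}$ such that $\langle s_{i_{p+1}}\cdots s_{i_r}(\Lambda),\alpha_{i_p}^\vee\rangle=1$ for all $1\le p\le r$. An element $w$ is dominant minuscule if it is $\Lambda$-minuscule for some $\Lambda\in P^+$. A dominant minuscule element $w$ is called strong minuscule if there exists a unique $\Lambda\in P^+$ such that $w$ is $\Lambda$-minuscule. *)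

theory Defs
  imports Main
begin

text \<open>Weights in P are encoded by their coordinates in the basis of
fundamental weights: a weight is a function lam :: nat => int with lam k = 0 for k outside
I = {1..n}; then lam i is the pairing of lam with the simple coroot alpha_i^vee.\<close>

datatype ctype = TA | TB | TC | TD

definition valid_type :: "ctype \<Rightarrow> nat \<Rightarrow> bool" where
  "valid_type t n \<longleftrightarrow> (case t of TA \<Rightarrow> n \<ge> 1 | TB \<Rightarrow> n \<ge> 2 | TC \<Rightarrow> n \<ge> 3 | TD \<Rightarrow> n \<ge> 4)"

text \<open>Cartan matrix a_ij = pairing of alpha_j with alpha_i^vee (Kac's convention, Bourbaki labelling).\<close>
definition cartan :: "ctype \<Rightarrow> nat \<Rightarrow> nat \<Rightarrow> nat \<Rightarrow> int" where
  "cartan t n i j =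
    (if i \<notin> {1..n} \<or> j \<notin> {1..n} then 0
     else if i = j then 2
     else (case t of
        TA \<Rightarrow> (if i + 1 = j \<or> j + 1 = i then -1 else 0)
      | TB \<Rightarrow> (if i = n \<and> j = n - 1 then -2
               else if i + 1 = j \<or> j + 1 = i then -1 else 0)
      | TC \<Rightarrow> (if i = n - 1 \<and> j = n then -2
               else if i + 1 = j \<or> j + 1 = i then -1 else 0)
      | TD \<Rightarrow> (if (i = n \<and> j = n - 2) \<or> (i = n - 2 \<and> j = n) then -1
               else if i = n \<or> j = n then 0
               else if i + 1 = j \<or> j + 1 = i then -1 else 0)))"

text \<open>Simple reflection: s_i(lam) = lam - <lam, alpha_i^vee> alpha_i, where alpha_i has
fundamental-weight coordinates (a_ki)_k.\<close>
definition sref :: "ctype \<Rightarrow> nat \<Rightarrow> nat \<Rightarrow> (nat \<Rightarrow> int) \<Rightarrow> (nat \<Rightarrow> int)" where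
  "sref t n i lam = (\<lambda>k. lam k - lam i * cartan t n k i)"

definition word_act :: "ctype \<Rightarrow> nat \<Rightarrow> nat list \<Rightarrow> (nat \<Rightarrow> int) \<Rightarrow> (nat \<Rightarrow> int)" where
  "word_act t n ws = foldr (\<lambda>i f. sref t n i \<circ> f) ws id"

definition weyl_group :: "ctype \<Rightarrow> nat \<Rightarrow> ((nat \<Rightarrow> int) \<Rightarrow> (nat \<Rightarrow> int)) set" where
  "weyl_group t n = {word_act t n ws | ws. set ws \<subseteq> {1..n}}"

definition reduced_expr :: "ctype \<Rightarrow> nat \<Rightarrow> ((nat \<Rightarrow> int) \<Rightarrow> (nat \<Rightarrow> int)) \<Rightarrow> nat list \<Rightarrow> bool" where
  "reduced_expr t n w ws \<longleftrightarrow> set ws \<subseteq> {1..n} \<and> word_act t n ws = w \<and>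
     (\<forall>vs. set vs \<subseteq> {1..n} \<and> word_act t n vs = w \<longrightarrow> length ws \<le> length vs)"

definition weight :: "nat \<Rightarrow> (nat \<Rightarrow> int) \<Rightarrow> bool" where
  "weight n lam \<longleftrightarrow> (\<forall>k. k \<notin> {1..n} \<longrightarrow> lam k = 0)"

definition dominant :: "nat \<Rightarrow> (nat \<Rightarrow> int) \<Rightarrow> bool" where
  "dominant n lam \<longleftrightarrow> weight n lam \<and> (\<forall>i\<in>{1..n}. lam i \<ge> 0)"

text \<open>w is Lam-minuscule (0-indexed positions: ws!p = i_{p+1}).\<close>
definition minuscule :: "ctype \<Rightarrow> nat \<Rightarrow> (nat \<Rightarrow> int) \<Rightarrow> ((nat \<Rightarrow> int) \<Rightarrow> (nat \<Rightarrow> int)) \<Rightarrow> bool" where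
  "minuscule t n lam w \<longleftrightarrow> (\<exists>ws. reduced_expr t n w ws \<and>
     (\<forall>p < length ws. word_act t n (drop (Suc p) ws) lam (ws ! p) = 1))"

definition dominant_minuscule :: "ctype \<Rightarrow> nat \<Rightarrow> ((nat \<Rightarrow> int) \<Rightarrow> (nat \<Rightarrow> int)) \<Rightarrow> bool" where
  "dominant_minuscule t n w \<longleftrightarrow> (\<exists>lam. dominant n lam \<and> minuscule t n lam w)"

definition strong_minuscule :: "ctype \<Rightarrow> nat \<Rightarrow> ((nat \<Rightarrow> int) \<Rightarrow> (nat \<Rightarrow> int)) \<Rightarrow> bool" where
  "strong_minuscule t n w \<longleftrightarrow> dominant_minuscule t n w \<and>
     (\<exists>!lam. dominant n lam \<and> minuscule t n lam w)"

end

theory Submission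
  imports Defs
begin
definition comb :: "ctype \<Rightarrow> nat \<Rightarrow> (nat \<Rightarrow> int) \<Rightarrow> nat \<Rightarrow> int" where
  "comb t n z = (\<lambda>k. \<Sum>j\<in>{1..n}. z j * cartan t n k j)"

lemma sum_delta_int: "(\<Sum>j\<in>{1..(n::nat)}. (z j::int) * (if j = a then c else 0)) = (if a \<in> {1..n} then z a * c else 0)"
proof -
  have "(\<Sum>j\<in>{1..(n::nat)}. (z j::int) * (if j = a then c else 0)) = (\<Sum>j\<in>{1..(n::nat)}. (if j = a then z a * c else 0))"
    by (rule sum.cong) auto
  then show ?thesis by (simp add: sum.delta')
qed

lemma rowA:
  assumes "t = TA \<or> (t = TB \<and> k < n) \<or> (t = TC \<and> k + 1 < n) \<or> (t = TD \<and> k + 2 < n)" "1 \<le> k" "k < n"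
  shows "comb t n z k = 2 * z k - (if k \<ge> 2 then z (k-1) else 0) - z (k+1)"
proof -
  have "comb t n z k = (\<Sum>j\<in>{1..n}. z j * (if j = k then 2 else 0) + z j * (if j = k + 1 then -1 else 0)
     + z j * (if j = k - 1 then (if k \<ge> 2 then -1 else 0) else 0))"
    unfolding comb_def using assms
    by (intro sum.cong) (auto simp: cartan_def split: ctype.splits)
  also have "\<dots> = 2 * z k - (if k \<ge> 2 then z (k-1) else 0) - z (k+1)"
    using assms by (simp only: sum.distrib sum_delta_int) auto
  finally show ?thesis .
qed


lemma rowA_last: assumes "t = TA" "1 \<le> n"
  shows "comb t n z n = 2 * z n - (if n \<ge> 2 then z (n-1) else 0)"
proof -
  have "comb t n z n = (\<Sum>j\<in>{1..n}. z j * (if j = n then 2 else 0)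
     + z j * (if j = n - 1 then (if n \<ge> 2 then -1 else 0) else 0))"
    unfolding comb_def using assms
    by (intro sum.cong) (auto simp: cartan_def split: ctype.splits)
  also have "\<dots> = 2 * z n - (if n \<ge> 2 then z (n-1) else 0)"
    using assms by (simp only: sum.distrib sum_delta_int) auto
  finally show ?thesis .
qed

lemma rowB_last: assumes "t = TB" "2 \<le> n"
  shows "comb t n z n = 2 * z n - 2 * z (n-1)"
proof -
  have "comb t n z n = (\<Sum>j\<in>{1..n}. z j * (if j = n then 2 else 0)
     + z j * (if j = n - 1 then -2 else 0))"
    unfolding comb_def using assms
    by (intro sum.cong) (auto simp: cartan_def split: ctype.splits)
  also have "\<dots> = 2 * z n - 2 * z (n-1)"
    using assms by (simp only: sum.distrib sum_delta_int) auto
  finally show ?thesis .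
qed

lemma rowC_last: assumes "t = TC" "3 \<le> n"
  shows "comb t n z n = 2 * z n - z (n-1)"
proof -
  have "comb t n z n = (\<Sum>j\<in>{1..n}. z j * (if j = n then 2 else 0)
     + z j * (if j = n - 1 then -1 else 0))"
    unfolding comb_def using assms
    by (intro sum.cong) (auto simp: cartan_def split: ctype.splits)
  also have "\<dots> = 2 * z n - z (n-1)"
    using assms by (simp only: sum.distrib sum_delta_int) auto
  finally show ?thesis .
qed

lemma rowC_pen: assumes "t = TC" "3 \<le> n"
  shows "comb t n z (n-1) = 2 * z (n-1) - z (n-2) - 2 * z n"
proof -
  have "comb t n z (n-1) = (\<Sum>j\<in>{1..n}. z j * (if j = n-1 then 2 else 0)
     + z j * (if j = n - 2 then -1 else 0) + z j * (if j = n then -2 else 0))"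
    unfolding comb_def using assms
    by (intro sum.cong) (auto simp: cartan_def split: ctype.splits)
  also have "\<dots> = 2 * z (n-1) - z (n-2) - 2 * z n"
    using assms by (simp only: sum.distrib sum_delta_int) auto
  finally show ?thesis .
qed

lemma rowD_last: assumes "t = TD" "4 \<le> n"
  shows "comb t n z n = 2 * z n - z (n-2)"
proof -
  have "comb t n z n = (\<Sum>j\<in>{1..n}. z j * (if j = n then 2 else 0)
     + z j * (if j = n - 2 then -1 else 0))"
    unfolding comb_def using assms
    by (intro sum.cong) (auto simp: cartan_def split: ctype.splits)
  also have "\<dots> = 2 * z n - z (n-2)"
    using assms by (simp only: sum.distrib sum_delta_int) auto
  finally show ?thesis .
qed

lemma rowD_pen: assumes "t = TD" "4 \<le> n"
  shows "comb t n z (n-1) = 2 * z (n-1) - z (n-2)"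
proof -
  have "comb t n z (n-1) = (\<Sum>j\<in>{1..n}. z j * (if j = n-1 then 2 else 0)
     + z j * (if j = n - 2 then -1 else 0))"
    unfolding comb_def using assms
    by (intro sum.cong) (auto simp: cartan_def split: ctype.splits)
  also have "\<dots> = 2 * z (n-1) - z (n-2)"
    using assms by (simp only: sum.distrib sum_delta_int) auto
  finally show ?thesis .
qed

lemma rowD_ant: assumes "t = TD" "4 \<le> n"
  shows "comb t n z (n-2) = 2 * z (n-2) - z (n-3) - z (n-1) - z n"
proof -
  have "\<exists>m. n = Suc (Suc (Suc (Suc m)))" using assms(2) by presburger
  then obtain m where m: "n = Suc (Suc (Suc (Suc m)))" by blast
  have "comb t n z (n-2) = (\<Sum>j\<in>{1..n}. z j * (if j = n-2 then 2 else 0)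
     + z j * (if j = n - 3 then -1 else 0) + z j * (if j = n - 1 then -1 else 0) + z j * (if j = n then -1 else 0))"
    unfolding comb_def using assms(1) unfolding m
    by (intro sum.cong) (auto simp: cartan_def)
  also have "\<dots> = 2 * z (n-2) - z (n-3) - z (n-1) - z n"
    using assms by (simp only: sum.distrib sum_delta_int) auto
  finally show ?thesis .
qed


lemma lin_growth:
  assumes h: "\<And>k. 1 \<le> k \<Longrightarrow> k \<le> m \<Longrightarrow> z (k+1) = 2 * z k - (if k \<ge> 2 then z (k-1) else 0)"
  shows "1 \<le> k \<Longrightarrow> k \<le> m + 1 \<Longrightarrow> z k = int k * (z 1 :: int)"
proof -
  have Q: "(k+1 \<le> m+1 \<longrightarrow> z(k+1) = int (k+1) * z 1) \<and> (k+2 \<le> m+1 \<longrightarrow> z(k+2) = int (k+2) * z 1)" for k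
  proof (induction k)
    case 0
    have "1 \<le> m \<Longrightarrow> z 2 = 2 * z 1" using h[of 1] by (simp add: numeral_2_eq_2)
    then show ?case by (simp add: numeral_2_eq_2)
  next
    case (Suc k)
    have "Suc k + 2 \<le> m + 1 \<Longrightarrow> z (Suc k + 2) = 2 * z (k+2) - z (k+1)"
      using h[of "k+2"] by (simp add: numeral_eq_Suc)
    then show ?case using Suc.IH by (auto simp: algebra_simps)
  qed
  assume "1 \<le> k" "k \<le> m + 1"
  then obtain j where "k = j + 1" by (metis add.commute le_add_diff_inverse)
  then show ?thesis using Q[of j] \<open>k \<le> m + 1\<close> by simp
qed


lemma comb_inj:
  assumes vt: "valid_type t n" and z: "\<forall>k\<in>{1..n}. comb t n z k = 0"
  shows "\<forall>j\<in>{1..n}. z j = 0"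
proof (cases t)
  case TA
  have n: "n \<ge> 1" using vt TA by (simp add: valid_type_def)
  have h: "z (k+1) = 2 * z k - (if k \<ge> 2 then z (k-1) else 0)" if "1 \<le> k" "k \<le> n-1" for k
  proof -
    have "comb t n z k = 0" using z that n by auto
    moreover have "comb t n z k = 2 * z k - (if k \<ge> 2 then z (k-1) else 0) - z (k+1)"
      by (rule rowA) (use that n TA in auto)
    ultimately show ?thesis by simp
  qed
  have g: "1 \<le> k \<Longrightarrow> k \<le> (n-1) + 1 \<Longrightarrow> z k = int k * z 1" for k
    by (rule lin_growth[of "n-1" z, OF h])
  have "0 = 2 * z n - (if n \<ge> 2 then z (n-1) else 0)" using z rowA_last[of t n z] TA n by auto
  then have eA: "0 = 2 * (int n * z 1) - (if n \<ge> 2 then int (n-1) * z 1 else 0)" using g[of n] g[of "n-1"] n by auto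
  then have "z 1 = 0"
  proof (cases "n \<ge> 2")
    case True
    have "int (n-1) = int n - 1" using n by (simp add: of_nat_diff)
    then have "0 = 2 * (int n * z 1) - (int n - 1) * z 1" using True eA by simp
    then have "(int n + 1) * z 1 = 0" by (simp add: algebra_simps)
    moreover have "int n + 1 \<noteq> 0" by linarith
    ultimately show ?thesis by simp
  next
    case False
    then have "n = 1" using n by simp
    then show ?thesis using eA by simp
  qed
  then have z1: "z 1 = 0" .
  show ?thesis
  proof
    fix j assume j: "j \<in> {1..n}"
    then have "z j = int j * z 1" using n by (intro g) auto
    with z1 show "z j = 0" by simp
  qed
next
  case TB
  have n: "n \<ge> 2" using vt TB by (simp add: valid_type_def)
  have h: "z (k+1) = 2 * z k - (if k \<ge> 2 then z (k-1) else 0)" if "1 \<le> k" "k \<le> n-1" for k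
  proof -
    have "comb t n z k = 0" using z that n by auto
    moreover have "comb t n z k = 2 * z k - (if k \<ge> 2 then z (k-1) else 0) - z (k+1)"
      by (rule rowA) (use that n TB in auto)
    ultimately show ?thesis by simp
  qed
  have g: "1 \<le> k \<Longrightarrow> k \<le> (n-1) + 1 \<Longrightarrow> z k = int k * z 1" for k
    by (rule lin_growth[of "n-1" z, OF h])
  have "0 = 2 * z n - 2 * z (n-1)" using z rowB_last[of t n z] TB n by auto
  then have "0 = 2 * (int n * z 1) - 2 * (int (n-1) * z 1)" using g[of n] g[of "n-1"] n by auto
  then have "z 1 = 0" using n by (auto simp: of_nat_diff algebra_simps)
  then have z1: "z 1 = 0" .
  show ?thesis
  proof
    fix j assume j: "j \<in> {1..n}"
    then have "z j = int j * z 1" using n by (intro g) auto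
    with z1 show "z j = 0" by simp
  qed
next
  case TC
  have n: "n \<ge> 3" using vt TC by (simp add: valid_type_def)
  have h: "z (k+1) = 2 * z k - (if k \<ge> 2 then z (k-1) else 0)" if "1 \<le> k" "k \<le> n-2" for k
  proof -
    have "comb t n z k = 0" using z that n by auto
    moreover have "comb t n z k = 2 * z k - (if k \<ge> 2 then z (k-1) else 0) - z (k+1)"
      by (rule rowA) (use that n TC in auto)
    ultimately show ?thesis by simp
  qed
  have g: "1 \<le> k \<Longrightarrow> k \<le> (n-2) + 1 \<Longrightarrow> z k = int k * z 1" for k
    by (rule lin_growth[of "n-2" z, OF h])
  have e1: "0 = 2 * z n - z (n-1)" using z rowC_last[of t n z] TC n by auto
  have e2: "0 = 2 * z (n-1) - z (n-2) - 2 * z n" using z rowC_pen[of t n z] TC n by auto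
  have "0 = 2 * (int (n-1) * z 1) - (int (n-2) * z 1) - int (n-1) * z 1"
    using e1 e2 g[of "n-1"] g[of "n-2"] n by auto
  then have z1: "z 1 = 0" using n by (auto simp: of_nat_diff algebra_simps)
  have "z n = 0" using z1 e1 g[of "n-1"] n by auto
  have zn: "z n = 0" by fact
  show ?thesis
  proof
    fix j assume j: "j \<in> {1..n}"
    then consider "j \<le> n - 1" | "j = n" by force
    then show "z j = 0" using g[of j] z1 zn j n by cases auto
  qed
next
  case TD
  have n: "n \<ge> 4" using vt TD by (simp add: valid_type_def)
  have h: "z (k+1) = 2 * z k - (if k \<ge> 2 then z (k-1) else 0)" if "1 \<le> k" "k \<le> n-3" for k
  proof -
    have "comb t n z k = 0" using z that n by auto
    moreover have "comb t n z k = 2 * z k - (if k \<ge> 2 then z (k-1) else 0) - z (k+1)"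
      by (rule rowA) (use that n TD in auto)
    ultimately show ?thesis by simp
  qed
  have g: "1 \<le> k \<Longrightarrow> k \<le> (n-3) + 1 \<Longrightarrow> z k = int k * z 1" for k
    by (rule lin_growth[of "n-3" z, OF h])
  have e1: "0 = 2 * z n - z (n-2)" using z rowD_last[of t n z] TD n by auto
  have e2: "0 = 2 * z (n-1) - z (n-2)" using z rowD_pen[of t n z] TD n by auto
  have e3: "0 = 2 * z (n-2) - z (n-3) - z (n-1) - z n" using z rowD_ant[of t n z] TD n by auto
  have "0 = 2 * (2 * z (n-2) - z (n-3) - z (n-1) - z n)" using e3 by simp
  also have "\<dots> = 4 * z (n-2) - 2 * z (n-3) - 2 * z (n-2)" using e1 e2 by simp
  also have "\<dots> = 4 * (int (n-2) * z 1) - 2 * (int (n-3) * z 1) - 2 * (int (n-2) * z 1)"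
    using g[of "n-2"] g[of "n-3"] n by auto
  also have "\<dots> = 2 * z 1" using n by (auto simp: of_nat_diff algebra_simps)
  finally have z1: "z 1 = 0" by simp
  have "z n = 0" "z (n-1) = 0" using z1 e1 e2 g[of "n-2"] n by auto
  then have zn: "z n = 0" "z (n-1) = 0" by auto
  show ?thesis
  proof
    fix j assume j: "j \<in> {1..n}"
    then consider "j \<le> n - 2" | "j = n - 1" | "j = n" by force
    then show "z j = 0" using g[of j] z1 zn j n by cases auto
  qed
qed


lemma word_act_Cons: "word_act t n (a # ws) lam = sref t n a (word_act t n ws lam)"
  by (simp add: word_act_def)

lemma word_act_Nil: "word_act t n [] lam = lam"
  by (simp add: word_act_def)

lemma comb_upd:
  assumes "a \<in> {1..n}"
  shows "comb t n (y(a := y a + c)) k = comb t n y k + c * cartan t n k a"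
proof -
  have "comb t n (y(a := y a + c)) k = (\<Sum>j\<in>{1..n}. y j * cartan t n k j + (cartan t n k j) * (if j = a then c else 0))"
    unfolding comb_def by (intro sum.cong) (auto simp: algebra_simps)
  also have "\<dots> = comb t n y k + c * cartan t n k a"
    using assms by (simp only: sum.distrib sum_delta_int comb_def) (simp add: mult.commute)
  finally show ?thesis .
qed

lemma word_lin:
  assumes "set ws \<subseteq> {1..n}"
  shows "\<exists>y. word_act t n ws lam = (\<lambda>k. lam k - comb t n y k) \<and> (\<forall>j. j \<notin> set ws \<longrightarrow> y j = 0)"
  using assms
proof (induction ws)
  case Nil
  show ?case by (intro exI[of _ "\<lambda>_. 0"]) (simp add: word_act_Nil comb_def)
next
  case (Cons a ws)
  then obtain y where y: "word_act t n ws lam = (\<lambda>k. lam k - comb t n y k)" "\<forall>j. j \<notin> set ws \<longrightarrow> y j = 0"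
    by auto
  have a: "a \<in> {1..n}" using Cons.prems by auto
  define c where "c = lam a - comb t n y a"
  show ?case
  proof (intro exI[of _ "y(a := y a + c)"] conjI)
    show "word_act t n (a # ws) lam = (\<lambda>k. lam k - comb t n (y(a := y a + c)) k)"
      unfolding word_act_Cons y sref_def comb_upd[OF a] c_def by (simp add: algebra_simps)
    show "\<forall>j. j \<notin> set (a # ws) \<longrightarrow> (y(a := y a + c)) j = 0" using y(2) by auto
  qed
qed

lemma word_minusc:
  assumes "set vs \<subseteq> {1..n}"
    and "\<forall>p < length vs. word_act t n (drop (Suc p) vs) lam (vs ! p) = 1"
  shows "word_act t n vs lam = (\<lambda>k. lam k - comb t n (\<lambda>j. int (count_list vs j)) k)"
  using assms
proof (induction vs)
  case Nil
  show ?case by (simp add: word_act_Nil comb_def)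
next
  case (Cons a vs)
  have a: "a \<in> {1..n}" using Cons.prems by auto
  have h0: "word_act t n vs lam a = 1" using Cons.prems(2)[rule_format, of 0] by simp
  have hs: "\<forall>p < length vs. word_act t n (drop (Suc p) vs) lam (vs ! p) = 1"
    using Cons.prems(2) by (metis Suc_less_eq drop_Suc_Cons length_Cons nth_Cons_Suc)
  have IH: "word_act t n vs lam = (\<lambda>k. lam k - comb t n (\<lambda>j. int (count_list vs j)) k)"
    using Cons.IH Cons.prems(1) hs by auto
  have cnt: "(\<lambda>j. int (count_list (a # vs) j)) = (\<lambda>j. int (count_list vs j))(a := int (count_list vs a) + 1)"
    by (auto simp: fun_eq_iff)
  have cu: "comb t n (\<lambda>j. int (count_list (a # vs) j)) k = comb t n (\<lambda>j. int (count_list vs j)) k + 1 * cartan t n k a" for k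
    unfolding cnt by (rule comb_upd[OF a])
  show ?case
    unfolding word_act_Cons sref_def h0 cu using IH by (simp add: algebra_simps)
qed

definition fundw :: "nat \<Rightarrow> nat \<Rightarrow> int" where "fundw i = (\<lambda>k. if k = i then 1 else 0)"

lemma word_shift:
  assumes "i \<notin> set us"
  shows "word_act t n us (\<lambda>k. lam k + fundw i k) = (\<lambda>k. word_act t n us lam k + fundw i k)"
  using assms
proof (induction us)
  case Nil
  show ?case by (simp add: word_act_Nil)
next
  case (Cons a us)
  then have "a \<noteq> i" by auto
  then show ?case using Cons by (simp add: word_act_Cons sref_def fundw_def algebra_simps)
qed


lemma comb_diff: "comb t n (\<lambda>j. a j - b j) k = comb t n a k - comb t n b k"
  unfolding comb_def by (simp add: left_diff_distrib sum_subtractf)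

theorem proposition4p2:
  fixes t :: ctype and n :: nat and w :: "(nat \<Rightarrow> int) \<Rightarrow> (nat \<Rightarrow> int)" and ws :: "nat list"
  assumes "valid_type t n"
    and "w \<in> weyl_group t n"
    and "strong_minuscule t n w"
    and "reduced_expr t n w ws"
  shows "\<forall>i\<in>{1..n}. card {p. p < length ws \<and> ws ! p = i} \<ge> 1"
proof
  fix i assume i: "i \<in> {1..n}"
  have ws: "set ws \<subseteq> {1..n}" "word_act t n ws = w" using assms(4) by (auto simp: reduced_expr_def)
  have "\<exists>!l. dominant n l \<and> minuscule t n l w" using assms(3) unfolding strong_minuscule_def by (rule conjunct2)
  then obtain lam where lam0: "dominant n lam \<and> minuscule t n lam w"
    and uniq0: "\<forall>l. dominant n l \<and> minuscule t n l w \<longrightarrow> l = lam"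
    by (rule ex1E)
  have lam: "dominant n lam" "minuscule t n lam w" using lam0 by (rule conjunct1, rule conjunct2)
  have uniq: "\<And>l. dominant n l \<Longrightarrow> minuscule t n l w \<Longrightarrow> l = lam" using uniq0 by simp
  obtain vs where vs: "reduced_expr t n w vs"
    and vsm: "\<forall>p < length vs. word_act t n (drop (Suc p) vs) lam (vs ! p) = 1"
    using lam(2) unfolding minuscule_def by blast
  have vs1: "set vs \<subseteq> {1..n}" "word_act t n vs = w" using vs by (auto simp: reduced_expr_def)
  show "card {p. p < length ws \<and> ws ! p = i} \<ge> 1"
  proof (rule ccontr)
    assume "\<not> card {p. p < length ws \<and> ws ! p = i} \<ge> 1"
    then have nc: "\<not> card {p. p < length ws \<and> ws ! p = i} > 0" by linarith
    have fin: "finite {p. p < length ws \<and> ws ! p = i}" by (rule finite_subset[of _ "{..<length ws}"]) auto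
    have iws: "i \<notin> set ws"
    proof
      assume "i \<in> set ws"
      then obtain p where p: "p < length ws" "ws ! p = i" by (auto simp: in_set_conv_nth)
      then have "p \<in> {p. p < length ws \<and> ws ! p = i}" by simp
      then have "{p. p < length ws \<and> ws ! p = i} \<noteq> {}" by blast
      with fin have "card {p. p < length ws \<and> ws ! p = i} > 0" by (simp only: card_gt_0_iff) simp
      with nc show False by simp
    qed
    obtain y where y: "word_act t n ws lam = (\<lambda>k. lam k - comb t n y k)" "\<forall>j. j \<notin> set ws \<longrightarrow> y j = 0"
      using word_lin[OF ws(1)] by blast
    have c: "word_act t n vs lam = (\<lambda>k. lam k - comb t n (\<lambda>j. int (count_list vs j)) k)"
      by (rule word_minusc[OF vs1(1) vsm])
    have eq: "word_act t n ws lam = word_act t n vs lam" using ws(2) vs1(2) by simp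
    have "\<forall>k\<in>{1..n}. comb t n (\<lambda>j. int (count_list vs j) - y j) k = 0"
    proof
      fix k
      have "word_act t n ws lam k = word_act t n vs lam k" using eq by simp
      then have "lam k - comb t n y k = lam k - comb t n (\<lambda>j. int (count_list vs j)) k"
        unfolding y(1) c .
      then show "comb t n (\<lambda>j. int (count_list vs j) - y j) k = 0" by (simp add: comb_diff)
    qed
    from comb_inj[OF assms(1) this] i have "int (count_list vs i) - y i = 0" by blast
    with y(2) iws have "count_list vs i = 0" by simp
    then have ivs: "i \<notin> set vs" by (simp add: count_list_0_iff)
    define lam' where "lam' = (\<lambda>k. lam k + fundw i k)"
    have "dominant n lam'"
      using lam(1) i unfolding dominant_def weight_def lam'_def fundw_def by auto
    moreover have "minuscule t n lam' w"
      unfolding minuscule_def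
    proof (intro exI conjI allI impI)
      show "reduced_expr t n w vs" by fact
      fix p assume p: "p < length vs"
      have "i \<notin> set (drop (Suc p) vs)" using ivs set_drop_subset by fast
      then have "word_act t n (drop (Suc p) vs) lam' (vs ! p) = word_act t n (drop (Suc p) vs) lam (vs ! p) + fundw i (vs ! p)"
        unfolding lam'_def by (simp add: word_shift)
      moreover have "vs ! p \<noteq> i" using ivs p nth_mem by metis
      ultimately show "word_act t n (drop (Suc p) vs) lam' (vs ! p) = 1"
        using vsm p by (simp add: fundw_def)
    qed
    ultimately have "lam' = lam" by (rule uniq)
    then have "lam' i = lam i" by simp
    then show False by (simp add: lam'_def fundw_def)
  qed
qed

end
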